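(* Let $h_1,h_2$ be odd (Grassmann) parameters with $h_1^2=h_2^2=0$ and $h_1h_2=-h_2h_1$. Let $\mathcal{A}_{h_1,h_2}$ be the associative superalgebra generated by even elements $a,d$ and odd elements $\beta,\gamma$, where $h_1,h_2$ commute with $a,d$ and anticommute with $\beta,\gamma$, subject to the relations $$a \beta = \beta a - h_2 (a^2 - \beta \gamma - ad), \quad d \beta = \beta d + h_2 (d^2 + \beta \gamma - da),$$ $$a \gamma = \gamma a + h_1 (a^2 + \gamma \beta - ad), \quad d \gamma = \gamma d - h_1 (d^2 - \gamma \beta - da),$$ $$\beta^2 = h_2 \beta (a - d), \quad \gamma^2 = h_1 \gamma (d - a),\quad \beta \gamma = - \gamma \beta + (h_1 \beta - h_2 \gamma)(d - a),$$ $$ad = da + (h_1 \beta + h_2 \gamma)(a - d) - h_1 h_2 (a^2 - 2 da + d^2),$$ and with formal inverses $a^{-1}$, $d^{-1}$ of $a$ and $d$ adjoined. Define the quantum superdeterminant $D_{h_1,h_2} = ad^{-1} - \beta d^{-1}\gamma d^{-1}$. Then $D_{h_1,h_2} = d^{-1}a - d^{-1}\beta d^{-1}\gamma$, and $D_{h_1,h_2}$ commutes with each of $a,\beta,\gamma,d$ (i.e. it is central in the algebra generated by the matrix entries of $T=\begin{pmatrix} a & \beta\\ \gamma & d\end{pmatrix}$).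
   Context: This algebra is the $(h_1,h_2)$-deformation of the algebra of coordinate functions on the supergroup GL$(1|1)$, denoted GL$_{h_1,h_2}(1|1)$; the generators $a,d$ are even and $\beta,\gamma$ are odd. *)

theory Defs
  imports Complex_Main
begin

definition qsdet :: "'a::ring_1 \<Rightarrow> 'a \<Rightarrow> 'a \<Rightarrow> 'a \<Rightarrow> 'a" where
  "qsdet a b c di = a * di - b * di * c * di"

end

theory Submission
  imports Defs
begin

lemma la: "x * y = (r::'r::ring_1) \<Longrightarrow> z * x * y = z * r"
  by (simp add: mult.assoc)

lemma ra: "x * y = (r::'r::ring_1) \<Longrightarrow> x * (y * z) = r * z"
  by (simp flip: mult.assoc)

theorem mainTheorem1:
  fixes h1 h2 a d b c ai di :: "'r::real_algebra_1"
  assumes grass: "h1 * h1 = 0" "h2 * h2 = 0" "h1 * h2 = - (h2 * h1)"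
    and hcomm: "h1 * a = a * h1" "h1 * d = d * h1" "h2 * a = a * h2" "h2 * d = d * h2"
    and hanti: "h1 * b = - (b * h1)" "h1 * c = - (c * h1)"
               "h2 * b = - (b * h2)" "h2 * c = - (c * h2)"
    and r1: "a * b = b * a - h2 * (a * a - b * c - a * d)"
    and r2: "d * b = b * d + h2 * (d * d + b * c - d * a)"
    and r3: "a * c = c * a + h1 * (a * a + c * b - a * d)"
    and r4: "d * c = c * d - h1 * (d * d - c * b - d * a)"
    and r5: "b * b = h2 * b * (a - d)"
    and r6: "c * c = h1 * c * (d - a)"
    and r7: "b * c = - (c * b) + (h1 * b - h2 * c) * (d - a)"
    and r8: "a * d = d * a + (h1 * b + h2 * c) * (a - d)
                     - h1 * h2 * (a * a - 2 * (d * a) + d * d)"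
    and inva: "a * ai = 1" "ai * a = 1"
    and invd: "d * di = 1" "di * d = 1"
  shows "qsdet a b c di = di * a - di * b * di * c
       \<and> qsdet a b c di * a = a * qsdet a b c di
       \<and> qsdet a b c di * b = b * qsdet a b c di
       \<and> qsdet a b c di * c = c * qsdet a b c di
       \<and> qsdet a b c di * d = d * qsdet a b c di"
proof -
  have h11: "h1 * h1 = 0" and h22: "h2 * h2 = 0" and h21: "h2 * h1 = - (h1 * h2)"
    using grass by (auto simp: minus_equation_iff)
  have ah1: "a * h1 = h1 * a" and dh1: "d * h1 = h1 * d" and ah2: "a * h2 = h2 * a" and dh2: "d * h2 = h2 * d"
    using hcomm by auto
  have bh1: "b * h1 = - (h1 * b)" and ch1: "c * h1 = - (h1 * c)"
   and bh2: "b * h2 = - (h2 * b)" and ch2: "c * h2 = - (h2 * c)"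
    using hanti by (auto simp: minus_equation_iff)
  have dih1: "di * h1 = h1 * di"
  proof -
    have "di * h1 = di * (h1 * d) * di" using invd by (simp add: mult.assoc)
    also have "\<dots> = h1 * di" using invd hcomm by (simp flip: mult.assoc)
    finally show ?thesis .
  qed
  have dih2: "di * h2 = h2 * di"
  proof -
    have "di * h2 = di * (h2 * d) * di" using invd by (simp add: mult.assoc)
    also have "\<dots> = h2 * di" using invd hcomm by (simp flip: mult.assoc)
    finally show ?thesis .
  qed
  have r8': "a * d = d * a + (h1 * b + h2 * c) * (a - d)
                     - h1 * h2 * (a * a - (d * a + d * a) + d * d)"
    using r8 by (simp add: mult_2)
  note basic = h11 h22 h21 ah1 dh1 ah2 dh2 bh1 ch1 bh2 ch2 dih1 dih2 r1 r2 r3 r4 r5 r6 r7 r8' invd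
  note rules = basic basic[THEN ra]
  have dib0: "di * b = b * di - h2 * (1 + di * b * c * di - a * di)"
  proof -
    have bd: "b * d = d * b - h2 * (d * d + b * c - d * a)" using r2 by (simp add: algebra_simps)
    have "di * b = di * (b * d) * di" using invd by (simp add: mult.assoc)
    also have "... = di * (d * b - h2 * (d * d + b * c - d * a)) * di" by (simp only: bd)
    also have "... = b * di - h2 * (1 + di * b * c * di - a * di)"
      using invd dih2 by (simp add: algebra_simps ra[OF invd(2)] ra[OF dih2])
    finally show ?thesis .
  qed
  have dib: "di * b = b * di - h2 + h2 * a * di - h2 * b * di * c * di"
  proof -
    have hdb: "h2 * (di * (b * z)) = h2 * (b * (di * z))" for z
      by (subst mult.assoc[symmetric], subst dib0) (simp add: algebra_simps h22 ra[OF h22])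
    show ?thesis by (subst dib0) (simp add: algebra_simps h22 ra[OF h22] hdb)
  qed
  have dic0: "di * c = c * di + h1 * (1 - di * c * b * di - a * di)"
  proof -
    have cd: "c * d = d * c + h1 * (d * d - c * b - d * a)" using r4 by (simp add: algebra_simps)
    have "di * c = di * (c * d) * di" using invd by (simp add: mult.assoc)
    also have "... = di * (d * c + h1 * (d * d - c * b - d * a)) * di" by (simp only: cd)
    also have "... = c * di + h1 * (1 - di * c * b * di - a * di)"
      using invd dih1 by (simp add: algebra_simps ra[OF invd(2)] ra[OF dih1])
    finally show ?thesis .
  qed
  have dic: "di * c = c * di + h1 - h1 * a * di - h1 * c * di * b * di"
  proof -
    have hdc: "h1 * (di * (c * z)) = h1 * (c * (di * z))" for z
      by (subst mult.assoc[symmetric], subst dic0) (simp add: algebra_simps h11 ra[OF h11])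
    show ?thesis by (subst dic0) (simp add: algebra_simps h11 ra[OF h11] hdc)
  qed
  define Z where "Z = (h1 * b + h2 * c) * (a - d) - h1 * h2 * (a * a - (d * a + d * a) + d * d)"
  have adi: "a * di = di * a - di * Z * di"
  proof -
    have da: "d * a = a * d - Z" using r8' unfolding Z_def by (simp add: algebra_simps)
    have "a * di = di * (d * a) * di" using invd by (simp flip: mult.assoc)
    also have "... = di * (a * d - Z) * di" by (simp only: da)
    also have "... = di * a - di * Z * di"
      using invd by (simp add: algebra_simps ra[OF invd(1)])
    finally show ?thesis .
  qed
  note adi' = adi[unfolded Z_def]
  have fz0: "z * a * h1 = z * h1 * a" for z
    using la[OF ah1, of z] by (simp add: algebra_simps)
  have fr0: "a * h1 = h1 * a"
    using fz0[of 1] by (simp only: mult_1_left)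
  have fz1: "z * a * h2 = z * h2 * a" for z
    using la[OF ah2, of z] by (simp add: algebra_simps)
  have fr1: "a * h2 = h2 * a"
    using fz1[of 1] by (simp only: mult_1_left)
  have fz2: "z * d * h1 = z * h1 * d" for z
    using la[OF dh1, of z] by (simp add: algebra_simps)
  have fr2: "d * h1 = h1 * d"
    using fz2[of 1] by (simp only: mult_1_left)
  have fz3: "z * d * h2 = z * h2 * d" for z
    using la[OF dh2, of z] by (simp add: algebra_simps)
  have fr3: "d * h2 = h2 * d"
    using fz3[of 1] by (simp only: mult_1_left)
  have fz4: "z * di * h1 = z * h1 * di" for z
    using la[OF dih1, of z] by (simp add: algebra_simps)
  have fr4: "di * h1 = h1 * di"
    using fz4[of 1] by (simp only: mult_1_left)
  have fz5: "z * di * h2 = z * h2 * di" for z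
    using la[OF dih2, of z] by (simp add: algebra_simps)
  have fr5: "di * h2 = h2 * di"
    using fz5[of 1] by (simp only: mult_1_left)
  have fz6: "z * b * h1 = - (z * h1 * b)" for z
    using la[OF bh1, of z] by (simp add: algebra_simps)
  have fr6: "b * h1 = - (h1 * b)"
    using fz6[of 1] by (simp only: mult_1_left)
  have fz7: "z * b * h2 = - (z * h2 * b)" for z
    using la[OF bh2, of z] by (simp add: algebra_simps)
  have fr7: "b * h2 = - (h2 * b)"
    using fz7[of 1] by (simp only: mult_1_left)
  have fz8: "z * c * h1 = - (z * h1 * c)" for z
    using la[OF ch1, of z] by (simp add: algebra_simps)
  have fr8: "c * h1 = - (h1 * c)"
    using fz8[of 1] by (simp only: mult_1_left)
  have fz9: "z * c * h2 = - (z * h2 * c)" for z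
    using la[OF ch2, of z] by (simp add: algebra_simps)
  have fr9: "c * h2 = - (h2 * c)"
    using fz9[of 1] by (simp only: mult_1_left)
  have fz10: "z * h1 * h1 = 0" for z
    using la[OF h11, of z] by (simp add: algebra_simps)
  have fr10: "h1 * h1 = 0"
    using fz10[of 1] by (simp only: mult_1_left)
  have fz11: "z * h2 * h2 = 0" for z
    using la[OF h22, of z] by (simp add: algebra_simps)
  have fr11: "h2 * h2 = 0"
    using fz11[of 1] by (simp only: mult_1_left)
  have fz12: "z * h2 * h1 = - (z * h1 * h2)" for z
    using la[OF h21, of z] by (simp add: algebra_simps)
  have fr12: "h2 * h1 = - (h1 * h2)"
    using fz12[of 1] by (simp only: mult_1_left)
  have fz13: "z * d * di = z" for z
    using la[OF invd(1), of z] by (simp add: algebra_simps)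
  have fr13: "d * di = 1"
    using fz13[of 1] by (simp only: mult_1_left)
  have fz14: "z * di * d = z" for z
    using la[OF invd(2), of z] by (simp add: algebra_simps)
  have fr14: "di * d = 1"
    using fz14[of 1] by (simp only: mult_1_left)
  have fz15: "z * a * b = z * b * a - (z * h2 * a * a) + z * h2 * b * c + z * h2 * a * d" for z
    using la[OF r1, of z] by (simp add: algebra_simps)
  have fr15: "a * b = b * a - (h2 * a * a) + h2 * b * c + h2 * a * d"
    using fz15[of 1] by (simp only: mult_1_left)
  have fz16: "z * d * b = z * b * d + z * h2 * d * d + z * h2 * b * c - (z * h2 * d * a)" for z
    using la[OF r2, of z] by (simp add: algebra_simps)
  have fr16: "d * b = b * d + h2 * d * d + h2 * b * c - (h2 * d * a)"
    using fz16[of 1] by (simp only: mult_1_left)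
  have fz17: "z * a * c = z * c * a + z * h1 * a * a + z * h1 * c * b - (z * h1 * a * d)" for z
    using la[OF r3, of z] by (simp add: algebra_simps)
  have fr17: "a * c = c * a + h1 * a * a + h1 * c * b - (h1 * a * d)"
    using fz17[of 1] by (simp only: mult_1_left)
  have fz18: "z * d * c = z * c * d - (z * h1 * d * d) + z * h1 * c * b + z * h1 * d * a" for z
    using la[OF r4, of z] by (simp add: algebra_simps)
  have fr18: "d * c = c * d - (h1 * d * d) + h1 * c * b + h1 * d * a"
    using fz18[of 1] by (simp only: mult_1_left)
  have fz19: "z * b * b = z * h2 * b * a - (z * h2 * b * d)" for z
    using la[OF r5, of z] by (simp add: algebra_simps)
  have fr19: "b * b = h2 * b * a - (h2 * b * d)"
    using fz19[of 1] by (simp only: mult_1_left)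
  have fz20: "z * c * c = z * h1 * c * d - (z * h1 * c * a)" for z
    using la[OF r6, of z] by (simp add: algebra_simps)
  have fr20: "c * c = h1 * c * d - (h1 * c * a)"
    using fz20[of 1] by (simp only: mult_1_left)
  have fz21: "z * b * c = - (z * c * b) + z * h1 * b * d - (z * h1 * b * a) - (z * h2 * c * d) + z * h2 * c * a" for z
    using la[OF r7, of z] by (simp add: algebra_simps)
  have fr21: "b * c = - (c * b) + h1 * b * d - (h1 * b * a) - (h2 * c * d) + h2 * c * a"
    using fz21[of 1] by (simp only: mult_1_left)
  have fz22: "z * a * d = z * d * a + z * h1 * b * a - (z * h1 * b * d) + z * h2 * c * a - (z * h2 * c * d) - (z * h1 * h2 * a * a) + z * h1 * h2 * d * a + z * h1 * h2 * d * a - (z * h1 * h2 * d * d)" for z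
    using la[OF r8', of z] by (simp add: algebra_simps)
  have fr22: "a * d = d * a + h1 * b * a - (h1 * b * d) + h2 * c * a - (h2 * c * d) - (h1 * h2 * a * a) + h1 * h2 * d * a + h1 * h2 * d * a - (h1 * h2 * d * d)"
    using fz22[of 1] by (simp only: mult_1_left)
  have fz23: "z * di * b = z * b * di - (z * h2) - (z * h2 * b * di * c * di) + z * h2 * a * di" for z
    using la[OF dib, of z] by (simp add: algebra_simps)
  have fr23: "di * b = b * di - (h2) - (h2 * b * di * c * di) + h2 * a * di"
    using fz23[of 1] by (simp only: mult_1_left)
  have fz24: "z * di * c = z * c * di + z * h1 - (z * h1 * c * di * b * di) - (z * h1 * a * di)" for z
    using la[OF dic, of z] by (simp add: algebra_simps)
  have fr24: "di * c = c * di + h1 - (h1 * c * di * b * di) - (h1 * a * di)"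
    using fz24[of 1] by (simp only: mult_1_left)
  have fz25: "z * a * di = z * di * a - (z * di * h1 * b * a * di) + z * di * h1 * b * d * di - (z * di * h2 * c * a * di) + z * di * h2 * c * d * di + z * di * h1 * h2 * a * a * di - (z * di * h1 * h2 * d * a * di) - (z * di * h1 * h2 * d * a * di) + z * di * h1 * h2 * d * d * di" for z
    using la[OF adi', of z] by (simp add: algebra_simps)
  have fr25: "a * di = di * a - (di * h1 * b * a * di) + di * h1 * b * d * di - (di * h2 * c * a * di) + di * h2 * c * d * di + di * h1 * h2 * a * a * di - (di * h1 * h2 * d * a * di) - (di * h1 * h2 * d * a * di) + di * h1 * h2 * d * d * di"
    using fz25[of 1] by (simp only: mult_1_left)
  note flatrules = fz0 fr0 fz1 fr1 fz2 fr2 fz3 fr3 fz4 fr4 fz5 fr5 fz6 fr6 fz7 fr7 fz8 fr8 fz9 fr9 fz10 fr10 fz11 fr11 fz12 fr12 fz13 fr13 fz14 fr14 fz15 fr15 fz16 fr16 fz17 fr17 fz18 fr18 fz19 fr19 fz20 fr20 fz21 fr21 fz22 fr22 fz23 fr23 fz24 fr24 fz25 fr25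
  show ?thesis
    unfolding qsdet_def
    by (intro conjI; simp add: algebra_simps flatrules del: mult.assoc add: mult.assoc[symmetric])
qed

end
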